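(* There exists an integral domain that is an IDF domain but is neither a BFD nor an MCD-finite domain.
   Context: For an integral domain $R$, write $R^*=R\setminus\{0\}$ for its multiplicative monoid and $R^\times$ for its group of units. A nonunit $a\in R^*$ is an atom (irreducible) if $a=uv$ with $u,v\in R^*$ forces $u$ or $v$ to be a unit. $R$ is an IDF domain if every nonzero element of $R$ is divisible by only finitely many atoms up to associates. $R$ is atomic if every nonzero nonunit is a finite product of atoms. $R$ is a BFD if it is atomic and for every nonzero nonunit $b$ the set of lengths $\{\ell : b=a_1\cdots a_\ell \text{ with all } a_i \text{ atoms}\}$ is finite. A common divisor $d$ of a nonempty subset $S\subseteq R^*$ is a maximal common divisor (MCD) of $S$ if the only common divisors of $\{s/d : s\in S\}$ are units; $R$ is MCD-finite if every nonempty finite subset of $R^*$ has only finitely many MCDs up to associates. *)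

theory Defs
  imports "HOL-Algebra.Ring"
begin

definition dvdR :: "('a, 'b) ring_scheme \<Rightarrow> 'a \<Rightarrow> 'a \<Rightarrow> bool" where
  "dvdR R a b \<longleftrightarrow> a \<in> carrier R \<and> b \<in> carrier R \<and> (\<exists>c\<in>carrier R. b = a \<otimes>\<^bsub>R\<^esub> c)"

definition assocR :: "('a, 'b) ring_scheme \<Rightarrow> 'a \<Rightarrow> 'a \<Rightarrow> bool" where
  "assocR R a b \<longleftrightarrow> a \<in> carrier R \<and> b \<in> carrier R \<and> (\<exists>u\<in>Units R. a = u \<otimes>\<^bsub>R\<^esub> b)"

definition atom :: "('a, 'b) ring_scheme \<Rightarrow> 'a \<Rightarrow> bool" where
  "atom R a \<longleftrightarrow> a \<in> carrier R - {\<zero>\<^bsub>R\<^esub>} \<and> a \<notin> Units R \<and>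
     (\<forall>u\<in>carrier R - {\<zero>\<^bsub>R\<^esub>}. \<forall>v\<in>carrier R - {\<zero>\<^bsub>R\<^esub>}.
        a = u \<otimes>\<^bsub>R\<^esub> v \<longrightarrow> u \<in> Units R \<or> v \<in> Units R)"

definition finite_up_to_assoc :: "('a, 'b) ring_scheme \<Rightarrow> 'a set \<Rightarrow> bool" where
  "finite_up_to_assoc R S \<longleftrightarrow> finite ((\<lambda>a. {b. assocR R a b}) ` S)"

definition IDF_domain :: "('a, 'b) ring_scheme \<Rightarrow> bool" where
  "IDF_domain R \<longleftrightarrow> domain R \<and>
     (\<forall>x\<in>carrier R - {\<zero>\<^bsub>R\<^esub>}. finite_up_to_assoc R {a. atom R a \<and> dvdR R a x})"

definition prodl :: "('a, 'b) ring_scheme \<Rightarrow> 'a list \<Rightarrow> 'a" where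
  "prodl R as = foldr (\<lambda>a b. a \<otimes>\<^bsub>R\<^esub> b) as \<one>\<^bsub>R\<^esub>"

definition atomic :: "('a, 'b) ring_scheme \<Rightarrow> bool" where
  "atomic R \<longleftrightarrow> (\<forall>x\<in>carrier R - {\<zero>\<^bsub>R\<^esub>} - Units R.
     \<exists>as. as \<noteq> [] \<and> (\<forall>a\<in>set as. atom R a) \<and> x = prodl R as)"

definition lengths :: "('a, 'b) ring_scheme \<Rightarrow> 'a \<Rightarrow> nat set" where
  "lengths R b = {length as | as. (\<forall>a\<in>set as. atom R a) \<and> b = prodl R as}"

definition BFD :: "('a, 'b) ring_scheme \<Rightarrow> bool" where
  "BFD R \<longleftrightarrow> domain R \<and> atomic R \<and>
     (\<forall>b\<in>carrier R - {\<zero>\<^bsub>R\<^esub>} - Units R. finite (lengths R b))"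

definition MCD :: "('a, 'b) ring_scheme \<Rightarrow> 'a set \<Rightarrow> 'a \<Rightarrow> bool" where
  "MCD R S d \<longleftrightarrow> (\<forall>s\<in>S. dvdR R d s) \<and>
     (\<forall>e\<in>carrier R. (\<forall>s\<in>S. \<forall>c\<in>carrier R. s = d \<otimes>\<^bsub>R\<^esub> c \<longrightarrow> dvdR R e c)
        \<longrightarrow> e \<in> Units R)"

definition MCD_finite :: "('a, 'b) ring_scheme \<Rightarrow> bool" where
  "MCD_finite R \<longleftrightarrow> (\<forall>S. S \<noteq> {} \<and> finite S \<and> S \<subseteq> carrier R - {\<zero>\<^bsub>R\<^esub>} \<longrightarrow>
     finite_up_to_assoc R {d. MCD R S d})"

end

theory Submission
  imports Defs "HOL-Library.Poly_Mapping" "HOL-Library.Product_Lexorder" "HOL-Library.Product_Plus" "HOL-Library.Z2" "HOL-Library.Countable"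
begin

instance prod :: (ordered_cancel_comm_monoid_add, ordered_cancel_comm_monoid_add) ordered_cancel_comm_monoid_add
proof
  fix a b c :: "'a \<times> 'b"
  assume "a \<le> b"
  then show "c + a \<le> c + b"
    by (cases a, cases b, cases c) (auto intro: add_strict_left_mono add_left_mono)
qed

type_synonym E = "rat \<times> rat \<times> rat"
type_synonym B = "E \<Rightarrow>\<^sub>0 bit"

lemma B_add_self: "(x::B) + x = 0"
proof (rule poly_mapping_eqI)
  fix k
  have "Poly_Mapping.lookup (x + x) k = Poly_Mapping.lookup x k + Poly_Mapping.lookup x k"
    by (rule lookup_add)
  then show "Poly_Mapping.lookup (x + x) k = Poly_Mapping.lookup 0 k"
    using bit_not_zero_iff[of "Poly_Mapping.lookup x k"]
    by (cases "Poly_Mapping.lookup x k = 0") auto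
qed

lemma B_sq_add: "((x::B) + y) * (x + y) = x * x + y * y"
proof -
  have "(x + y) * (x + y) = x * x + y * y + (x * y + x * y)"
    by (simp add: algebra_simps)
  then show ?thesis by (simp add: B_add_self)
qed

lemma B_sq_sum: "finite A \<Longrightarrow> (\<Sum>i\<in>A. (f i::B)) * (\<Sum>i\<in>A. f i) = (\<Sum>i\<in>A. f i * f i)"
  by (induction A rule: finite_induct) (simp_all add: B_sq_add)

lemma B_lookup_keys: "Poly_Mapping.lookup (f::B) k = (if k \<in> Poly_Mapping.keys f then 1 else 0)"
  using bit_not_zero_iff[of "Poly_Mapping.lookup f k"] by (auto simp: in_keys_iff)

lemma B_expand: "(f::B) = (\<Sum>m\<in>Poly_Mapping.keys f. Poly_Mapping.single m 1)"
proof (rule poly_mapping_eqI)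
  fix k
  have "Poly_Mapping.lookup (\<Sum>m\<in>Poly_Mapping.keys f. Poly_Mapping.single m 1) k
      = (\<Sum>m\<in>Poly_Mapping.keys f. if m = k then 1 else 0)"
    by (simp add: lookup_sum lookup_single when_def)
  also have "\<dots> = (if k \<in> Poly_Mapping.keys f then 1 else 0)"
    by (simp add: sum.delta)
  also have "\<dots> = Poly_Mapping.lookup f k"
    by (rule B_lookup_keys[symmetric])
  finally show "Poly_Mapping.lookup f k = Poly_Mapping.lookup (\<Sum>m\<in>Poly_Mapping.keys f. Poly_Mapping.single m 1) k" ..
qed

lemma B_keys_eq: "Poly_Mapping.keys (f::B) = Poly_Mapping.keys g \<Longrightarrow> f = g"
  by (metis B_expand)

lemma lookup_mult_unique:
  fixes f g :: B
  assumes a: "a \<in> Poly_Mapping.keys f" and b: "b \<in> Poly_Mapping.keys g"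
    and uniq: "\<And>a' b'. a' \<in> Poly_Mapping.keys f \<Longrightarrow> b' \<in> Poly_Mapping.keys g \<Longrightarrow> a' + b' = a + b \<Longrightarrow> a' = a \<and> b' = b"
  shows "Poly_Mapping.lookup (f * g) (a + b) = 1"
proof -
  have "f * g = (\<Sum>x\<in>Poly_Mapping.keys f. Poly_Mapping.single x 1) * (\<Sum>y\<in>Poly_Mapping.keys g. Poly_Mapping.single y 1)"
    by (metis B_expand)
  also have "\<dots> = (\<Sum>x\<in>Poly_Mapping.keys f. \<Sum>y\<in>Poly_Mapping.keys g. Poly_Mapping.single (x + y) 1)"
    by (simp add: sum_product Poly_Mapping.mult_single)
  finally have "Poly_Mapping.lookup (f * g) (a + b) = (\<Sum>x\<in>Poly_Mapping.keys f. \<Sum>y\<in>Poly_Mapping.keys g. (if x + y = a + b then 1 else 0))"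
    by (simp add: lookup_sum lookup_single when_def)
  also have "\<dots> = (\<Sum>x\<in>Poly_Mapping.keys f. \<Sum>y\<in>Poly_Mapping.keys g. (if x = a \<and> y = b then 1 else 0))"
    by (intro sum.cong refl) (use uniq in auto)
  also have "\<dots> = (\<Sum>x\<in>Poly_Mapping.keys f. (if x = a then 1 else 0))"
    by (intro sum.cong refl) (use b in auto)
  also have "\<dots> = 1"
    using a by simp
  finally show ?thesis .
qed

lemma mono_factor:
  fixes f g :: B
  assumes fg: "f * g = Poly_Mapping.single m 1"
  shows "\<exists>a. f = Poly_Mapping.single a 1"
proof -
  have s0: "Poly_Mapping.single m (1::bit) \<noteq> 0"
  proof
    assume "Poly_Mapping.single m (1::bit) = 0"
    then have "Poly_Mapping.keys (Poly_Mapping.single m (1::bit)) = Poly_Mapping.keys (0::B)" by simp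
    then show False by simp
  qed
  have f0: "f \<noteq> 0" and g0: "g \<noteq> 0" using fg s0 by auto
  then have kf: "finite (Poly_Mapping.keys f)" "Poly_Mapping.keys f \<noteq> {}" and kg: "finite (Poly_Mapping.keys g)" "Poly_Mapping.keys g \<noteq> {}" by auto
  define aM where "aM = Max (Poly_Mapping.keys f)"
  define am where "am = Min (Poly_Mapping.keys f)"
  define bM where "bM = Max (Poly_Mapping.keys g)"
  define bm where "bm = Min (Poly_Mapping.keys g)"
  have aM: "aM \<in> Poly_Mapping.keys f" "\<And>x. x \<in> Poly_Mapping.keys f \<Longrightarrow> x \<le> aM" using kf by (auto simp: aM_def)
  have am: "am \<in> Poly_Mapping.keys f" "\<And>x. x \<in> Poly_Mapping.keys f \<Longrightarrow> am \<le> x" using kf by (auto simp: am_def)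
  have bM: "bM \<in> Poly_Mapping.keys g" "\<And>x. x \<in> Poly_Mapping.keys g \<Longrightarrow> x \<le> bM" using kg by (auto simp: bM_def)
  have bm: "bm \<in> Poly_Mapping.keys g" "\<And>x. x \<in> Poly_Mapping.keys g \<Longrightarrow> bm \<le> x" using kg by (auto simp: bm_def)
  have "Poly_Mapping.lookup (f * g) (aM + bM) = 1"
  proof (rule lookup_mult_unique[OF aM(1) bM(1)])
    fix a' b' assume H: "a' \<in> Poly_Mapping.keys f" "b' \<in> Poly_Mapping.keys g" "a' + b' = aM + bM"
    have "a' = aM"
    proof (rule ccontr)
      assume "a' \<noteq> aM"
      then have "a' < aM" using aM(2)[OF H(1)] by simp
      then have "a' + b' < aM + bM" using bM(2)[OF H(2)] by (rule add_less_le_mono)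
      then show False using H(3) by simp
    qed
    then show "a' = aM \<and> b' = bM" using H(3) by simp
  qed
  then have 1: "aM + bM = m" using fg by (auto simp: lookup_single when_def split: if_splits)
  have "Poly_Mapping.lookup (f * g) (am + bm) = 1"
  proof (rule lookup_mult_unique[OF am(1) bm(1)])
    fix a' b' assume H: "a' \<in> Poly_Mapping.keys f" "b' \<in> Poly_Mapping.keys g" "a' + b' = am + bm"
    have "a' = am"
    proof (rule ccontr)
      assume "a' \<noteq> am"
      then have "am < a'" using am(2)[OF H(1)] by simp
      then have "am + bm < a' + b'" using bm(2)[OF H(2)] by (rule add_less_le_mono)
      then show False using H(3) by simp
    qed
    then show "a' = am \<and> b' = bm" using H(3) by simp
  qed
  then have 2: "am + bm = m" using fg by (auto simp: lookup_single when_def split: if_splits)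
  have "am = aM"
  proof (rule ccontr)
    assume "am \<noteq> aM"
    then have "am < aM" using am(2)[OF aM(1)] by simp
    then have "am + bm < aM + bM" using bm(2)[OF bM(1)] by (rule add_less_le_mono)
    then show False using 1 2 by simp
  qed
  then have "Poly_Mapping.keys f = {aM}" using am(2) aM(2) aM(1) by (auto intro: order.antisym)
  then have "f = Poly_Mapping.single aM 1" by (intro B_keys_eq) simp
  then show ?thesis by blast
qed


definition Good :: "E set" where
  "Good = {m. m = 0 \<or> (0 \<le> fst m \<and> 0 \<le> fst (snd m) \<and> (0 < fst m \<or> 0 < fst (snd m)))}"

definition Rset :: "B set" where
  "Rset = {f. Poly_Mapping.keys f \<subseteq> Good}"

lemma Good_add: "a \<in> Good \<Longrightarrow> b \<in> Good \<Longrightarrow> a + b \<in> Good"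
  by (cases a; cases b) (auto simp: Good_def zero_prod_def)

lemma Good_zero_sum: "a \<in> Good \<Longrightarrow> b \<in> Good \<Longrightarrow> a + b = 0 \<Longrightarrow> a = 0"
  by (cases a; cases b) (auto simp: Good_def zero_prod_def)

lemma Rset_mult: "f \<in> Rset \<Longrightarrow> g \<in> Rset \<Longrightarrow> f * g \<in> Rset"
  unfolding Rset_def using keys_mult[of f g] Good_add by blast

lemma Rset_add: "f \<in> Rset \<Longrightarrow> g \<in> Rset \<Longrightarrow> f + g \<in> Rset"
  unfolding Rset_def using keys_add[of f g] by blast

lemma Rset_zero: "0 \<in> Rset"
  by (simp add: Rset_def)

lemma Rset_one: "1 \<in> Rset"
  by (simp add: Rset_def Good_def)

lemma Rset_single: "m \<in> Good \<Longrightarrow> Poly_Mapping.single m (1::bit) \<in> Rset"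
  by (simp add: Rset_def)

lemma single_inj1: "Poly_Mapping.single a (1::bit) = Poly_Mapping.single b 1 \<Longrightarrow> a = b"
  by (metis keys_single one_neq_zero singleton_inject)

lemma single_neq0: "Poly_Mapping.single (m::E) (1::bit) \<noteq> 0"
proof
  assume "Poly_Mapping.single m (1::bit) = 0"
  then have "Poly_Mapping.keys (Poly_Mapping.single m (1::bit)) = {}" by simp
  then show False by simp
qed

lemma single_mult1: "Poly_Mapping.single a (1::bit) * Poly_Mapping.single b 1 = Poly_Mapping.single (a + b) 1"
  by (simp add: Poly_Mapping.mult_single)

lemma one_B: "(1::B) = Poly_Mapping.single 0 1"
  by simp

lemma Rset_unit: assumes "u \<in> Rset" "v \<in> Rset" "u * v = 1" shows "u = 1"
proof -
  obtain a where a: "u = Poly_Mapping.single a 1" using mono_factor assms(3) one_B by metis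
  obtain b where b: "v = Poly_Mapping.single b 1" using mono_factor[of v u 0] assms(3) one_B by (metis mult.commute)
  have "Poly_Mapping.single (a + b) (1::bit) = Poly_Mapping.single 0 1"
    using assms(3) a b by (simp add: single_mult1)
  then have ab: "a + b = 0" by (rule single_inj1)
  have "a \<in> Good" "b \<in> Good" using assms(1,2) a b by (auto simp: Rset_def)
  then have "a = 0" using ab Good_zero_sum by blast
  then show ?thesis using a by simp
qed

definition half :: "E \<Rightarrow> E" where
  "half m = (fst m / 2, fst (snd m) / 2, snd (snd m) / 2)"

lemma half_half: "half m + half m = m"
  by (cases m) (simp add: half_def)

lemma Good_half: "m \<in> Good \<Longrightarrow> half m \<in> Good"
  by (cases m) (auto simp: Good_def half_def zero_prod_def)

lemma Rset_sqrt: assumes "f \<in> Rset" shows "\<exists>g\<in>Rset. g * g = f"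
proof -
  define g where "g = (\<Sum>m\<in>Poly_Mapping.keys f. Poly_Mapping.single (half m) (1::bit))"
  have "g * g = (\<Sum>m\<in>Poly_Mapping.keys f. Poly_Mapping.single (half m) (1::bit) * Poly_Mapping.single (half m) 1)"
    unfolding g_def by (rule B_sq_sum) simp
  also have "\<dots> = (\<Sum>m\<in>Poly_Mapping.keys f. Poly_Mapping.single m 1)"
    by (simp add: single_mult1 half_half)
  also have "\<dots> = f" by (rule B_expand[symmetric])
  finally have gg: "g * g = f" .
  have "Poly_Mapping.keys g \<subseteq> (\<Union>m\<in>Poly_Mapping.keys f. Poly_Mapping.keys (Poly_Mapping.single (half m) (1::bit)))"
    unfolding g_def by (rule keys_sum)
  also have "\<dots> \<subseteq> Good" using assms Good_half by (auto simp: Rset_def)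
  finally have "g \<in> Rset" by (simp add: Rset_def)
  with gg show ?thesis by blast
qed


lemma Good_key:
  assumes "a \<in> Good" "b \<in> Good" "b' \<in> Good" "a + b = (1, 0, c)" "a + b' = (0, 1, c')"
  shows "a = 0"
  using assms by (cases a; cases b; cases b') (auto simp: Good_def zero_prod_def)

definition enc :: "B \<Rightarrow> nat set" where
  "enc f = to_nat ` Poly_Mapping.keys f"

lemma enc_inj: "inj enc"
proof (rule injI)
  fix f g assume "enc f = enc g"
  then have "Poly_Mapping.keys f = Poly_Mapping.keys g"
    by (simp add: enc_def inj_image_eq_iff[OF inj_to_nat])
  then show "f = g" by (rule B_keys_eq)
qed

definition dec :: "nat set \<Rightarrow> B" where
  "dec = inv_into UNIV enc"

lemma dec_enc [simp]: "dec (enc f) = f"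
  using enc_inj by (simp add: dec_def)

lemma enc_eq_iff [simp]: "enc f = enc g \<longleftrightarrow> f = g"
  using enc_inj by (auto dest: injD)

definition RR :: "nat set ring" where
  "RR = \<lparr>carrier = enc ` Rset, mult = (\<lambda>a b. enc (dec a * dec b)), one = enc 1,
         zero = enc 0, add = (\<lambda>a b. enc (dec a + dec b))\<rparr>"

lemma RR_simps [simp]:
  "carrier RR = enc ` Rset"
  "enc f \<otimes>\<^bsub>RR\<^esub> enc g = enc (f * g)"
  "enc f \<oplus>\<^bsub>RR\<^esub> enc g = enc (f + g)"
  "\<one>\<^bsub>RR\<^esub> = enc 1"
  "\<zero>\<^bsub>RR\<^esub> = enc 0"
  by (simp_all add: RR_def)

lemma RR_carrierE:
  assumes "x \<in> carrier RR" obtains f where "f \<in> Rset" "x = enc f"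
  using assms by auto

lemma RR_cring: "cring RR"
proof (rule cringI)
  show "abelian_group RR"
  proof (rule abelian_groupI)
    fix x assume "x \<in> carrier RR"
    then obtain f where f: "f \<in> Rset" "x = enc f" by (rule RR_carrierE)
    then show "\<exists>y\<in>carrier RR. y \<oplus>\<^bsub>RR\<^esub> x = \<zero>\<^bsub>RR\<^esub>"
      by (intro bexI[of _ x]) (simp_all add: B_add_self)
  next
    fix x y assume "x \<in> carrier RR" "y \<in> carrier RR"
    then obtain f g where "f \<in> Rset" "x = enc f" "g \<in> Rset" "y = enc g" by (metis RR_carrierE)
    then show "x \<oplus>\<^bsub>RR\<^esub> y \<in> carrier RR" "x \<oplus>\<^bsub>RR\<^esub> y = y \<oplus>\<^bsub>RR\<^esub> x"
      by (simp_all add: Rset_add add.commute)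
  next
    fix x y z assume "x \<in> carrier RR" "y \<in> carrier RR" "z \<in> carrier RR"
    then obtain f g h where "x = enc f" "y = enc g" "z = enc h" by (metis RR_carrierE)
    then show "x \<oplus>\<^bsub>RR\<^esub> y \<oplus>\<^bsub>RR\<^esub> z = x \<oplus>\<^bsub>RR\<^esub> (y \<oplus>\<^bsub>RR\<^esub> z)"
      by (simp add: add.assoc)
  next
    fix x assume "x \<in> carrier RR"
    then obtain f where "x = enc f" by (rule RR_carrierE)
    then show "\<zero>\<^bsub>RR\<^esub> \<oplus>\<^bsub>RR\<^esub> x = x" by simp
  next
    show "\<zero>\<^bsub>RR\<^esub> \<in> carrier RR" using Rset_zero by simp
  qed
  show "comm_monoid RR"
  proof (rule comm_monoidI)
    fix x y assume "x \<in> carrier RR" "y \<in> carrier RR"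
    then obtain f g where "f \<in> Rset" "x = enc f" "g \<in> Rset" "y = enc g" by (metis RR_carrierE)
    then show "x \<otimes>\<^bsub>RR\<^esub> y \<in> carrier RR" "x \<otimes>\<^bsub>RR\<^esub> y = y \<otimes>\<^bsub>RR\<^esub> x"
      by (simp_all add: Rset_mult mult.commute)
  next
    fix x y z assume "x \<in> carrier RR" "y \<in> carrier RR" "z \<in> carrier RR"
    then obtain f g h where "x = enc f" "y = enc g" "z = enc h" by (metis RR_carrierE)
    then show "x \<otimes>\<^bsub>RR\<^esub> y \<otimes>\<^bsub>RR\<^esub> z = x \<otimes>\<^bsub>RR\<^esub> (y \<otimes>\<^bsub>RR\<^esub> z)"
      by (simp add: mult.assoc)
  next
    fix x assume "x \<in> carrier RR"
    then obtain f where "x = enc f" by (rule RR_carrierE)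
    then show "\<one>\<^bsub>RR\<^esub> \<otimes>\<^bsub>RR\<^esub> x = x" by simp
  next
    show "\<one>\<^bsub>RR\<^esub> \<in> carrier RR" using Rset_one by simp
  qed
  fix x y z assume "x \<in> carrier RR" "y \<in> carrier RR" "z \<in> carrier RR"
  then obtain f g h where "x = enc f" "y = enc g" "z = enc h" by (metis RR_carrierE)
  then show "(x \<oplus>\<^bsub>RR\<^esub> y) \<otimes>\<^bsub>RR\<^esub> z = x \<otimes>\<^bsub>RR\<^esub> z \<oplus>\<^bsub>RR\<^esub> y \<otimes>\<^bsub>RR\<^esub> z"
    by (simp add: distrib_right)
qed

lemma RR_domain: "domain RR"
proof (rule domain.intro[OF RR_cring], rule domain_axioms.intro)
  show "\<one>\<^bsub>RR\<^esub> \<noteq> \<zero>\<^bsub>RR\<^esub>" by simp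
  show "\<And>a b. a \<otimes>\<^bsub>RR\<^esub> b = \<zero>\<^bsub>RR\<^esub> \<Longrightarrow> a \<in> carrier RR \<Longrightarrow> b \<in> carrier RR \<Longrightarrow>
      a = \<zero>\<^bsub>RR\<^esub> \<or> b = \<zero>\<^bsub>RR\<^esub>"
  proof -
    fix a b assume H: "a \<otimes>\<^bsub>RR\<^esub> b = \<zero>\<^bsub>RR\<^esub>" "a \<in> carrier RR" "b \<in> carrier RR"
    then obtain f g where fg: "a = enc f" "b = enc g" by (metis RR_carrierE)
    then have "f * g = 0" using H(1) by simp
    then show "a = \<zero>\<^bsub>RR\<^esub> \<or> b = \<zero>\<^bsub>RR\<^esub>" using fg by simp
  qed
qed

lemma RR_Units: "Units RR = {enc 1}"
proof
  show "Units RR \<subseteq> {enc 1}"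
  proof
    fix y assume "y \<in> Units RR"
    then obtain u v where uv: "u \<in> Rset" "v \<in> Rset" "y = enc u" "enc (u * v) = enc 1"
      unfolding Units_def by auto
    then have "u * v = 1" by simp
    then have "u = 1" using Rset_unit uv by blast
    then show "y \<in> {enc 1}" using uv by simp
  qed
  show "{enc 1} \<subseteq> Units RR"
    unfolding Units_def using Rset_one by force
qed

lemma RR_no_atom: "\<not> atom RR a"
proof
  assume A: "atom RR a"
  then obtain f where f: "f \<in> Rset" "a = enc f" by (auto simp: atom_def)
  have a0: "f \<noteq> 0" using A f by (auto simp: atom_def)
  have aU: "f \<noteq> 1" using A f by (auto simp: atom_def RR_Units)
  have fac: "\<forall>u\<in>carrier RR - {\<zero>\<^bsub>RR\<^esub>}. \<forall>v\<in>carrier RR - {\<zero>\<^bsub>RR\<^esub>}.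
        a = u \<otimes>\<^bsub>RR\<^esub> v \<longrightarrow> u \<in> Units RR \<or> v \<in> Units RR"
    using A by (simp add: atom_def)
  obtain g where g: "g \<in> Rset" "g * g = f" using Rset_sqrt f(1) by blast
  have g0: "g \<noteq> 0" using g a0 by auto
  have "enc g \<in> carrier RR - {\<zero>\<^bsub>RR\<^esub>}" using g g0 by simp
  moreover have "a = enc g \<otimes>\<^bsub>RR\<^esub> enc g" using g f by simp
  ultimately have "enc g \<in> Units RR" using fac by blast
  then have "g = 1" by (simp add: RR_Units)
  then show False using g aU by simp
qed


lemma RR_assoc_class: "a \<in> carrier RR \<Longrightarrow> {b. assocR RR a b} = {a}"
proof -
  assume a: "a \<in> carrier RR"
  have "assocR RR a b \<longleftrightarrow> b = a" for b
  proof
    assume "assocR RR a b"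
    then obtain u where "b \<in> carrier RR" "u \<in> Units RR" "a = u \<otimes>\<^bsub>RR\<^esub> b"
      by (auto simp: assocR_def)
    moreover obtain g where "b = enc g" using \<open>b \<in> carrier RR\<close> by (rule RR_carrierE)
    ultimately show "b = a" by (simp add: RR_Units)
  next
    assume "b = a"
    moreover obtain f where "a = enc f" using a by (rule RR_carrierE)
    ultimately show "assocR RR a b" using a by (auto simp: assocR_def RR_Units)
  qed
  then show ?thesis by auto
qed

lemma RR_dvd_single:
  assumes "e \<in> carrier RR" "dvdR RR e (enc (Poly_Mapping.single m 1))"
  shows "\<exists>a b. e = enc (Poly_Mapping.single a 1) \<and> a \<in> Good \<and> b \<in> Good \<and> a + b = m"
proof -
  obtain u where u: "u \<in> Rset" "e = enc u" using assms(1) by (rule RR_carrierE)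
  obtain h where h: "h \<in> carrier RR" "enc (Poly_Mapping.single m 1) = e \<otimes>\<^bsub>RR\<^esub> h"
    using assms(2) by (auto simp: dvdR_def)
  obtain w where w: "w \<in> Rset" "h = enc w" using h(1) by (rule RR_carrierE)
  have uw: "u * w = Poly_Mapping.single m 1" using h(2) u w by simp
  obtain a where a: "u = Poly_Mapping.single a 1" using mono_factor[OF uw] by blast
  obtain b where b: "w = Poly_Mapping.single b 1" using mono_factor[of w u m] uw by (metis mult.commute)
  have "Poly_Mapping.single (a + b) (1::bit) = Poly_Mapping.single m 1" using uw a b by (simp add: single_mult1)
  then have "a + b = m" by (rule single_inj1)
  moreover have "a \<in> Good" "b \<in> Good" using u(1) w(1) a b by (auto simp: Rset_def)
  ultimately show ?thesis using u a by blast
qed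

theorem mainTheorem1:
  shows "\<exists>R :: nat set ring. domain R \<and> IDF_domain R \<and> \<not> BFD R \<and> \<not> MCD_finite R"
proof (intro exI[of _ RR] conjI)
  show "domain RR" by (rule RR_domain)
  show "IDF_domain RR"
    unfolding IDF_domain_def finite_up_to_assoc_def using RR_domain RR_no_atom by simp
  show "\<not> BFD RR"
  proof
    assume "BFD RR"
    then have at: "atomic RR" by (simp add: BFD_def)
    define X where "X = enc (Poly_Mapping.single (1, 0, 0) 1)"
    have XR: "Poly_Mapping.single ((1, 0, 0)::E) (1::bit) \<in> Rset" by (rule Rset_single) (simp add: Good_def)
    have "Poly_Mapping.single ((1, 0, 0)::E) (1::bit) \<noteq> 1"
    proof
      assume "Poly_Mapping.single ((1, 0, 0)::E) (1::bit) = 1"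
      then have "Poly_Mapping.single ((1, 0, 0)::E) (1::bit) = Poly_Mapping.single 0 1" by simp
      then have "((1, 0, 0)::E) = 0" by (rule single_inj1)
      then show False by (simp add: zero_prod_def)
    qed
    moreover have "Poly_Mapping.single ((1, 0, 0)::E) (1::bit) \<noteq> 0" by (rule single_neq0)
    ultimately have Xin: "X \<in> carrier RR - {\<zero>\<^bsub>RR\<^esub>} - Units RR" using XR by (simp add: X_def RR_Units)
    have "\<exists>as. as \<noteq> [] \<and> (\<forall>a\<in>set as. atom RR a) \<and> X = prodl RR as"
      using at Xin unfolding atomic_def by blast
    then obtain as where "as \<noteq> []" "\<forall>a\<in>set as. atom RR a" by blast
    then show False using RR_no_atom by (cases as) auto
  qed
  show "\<not> MCD_finite RR"
  proof
    assume H: "MCD_finite RR"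
    define s1 where "s1 = enc (Poly_Mapping.single (1, 1, 0) 1)"
    define s2 where "s2 = enc (Poly_Mapping.single (0, 2, 0) 1)"
    define S where "S = {s1, s2}"
    have s1R: "s1 \<in> carrier RR" "s1 \<noteq> \<zero>\<^bsub>RR\<^esub>" unfolding s1_def
      using Rset_single[of "(1, 1, 0)"] single_neq0[of "(1, 1, 0)"] by (auto simp: Good_def)
    have s2R: "s2 \<in> carrier RR" "s2 \<noteq> \<zero>\<^bsub>RR\<^esub>" unfolding s2_def
      using Rset_single[of "(0, 2, 0)"] single_neq0[of "(0, 2, 0)"] by (auto simp: Good_def)
    have SS: "S \<noteq> {} \<and> finite S \<and> S \<subseteq> carrier RR - {\<zero>\<^bsub>RR\<^esub>}"
      using s1R s2R by (auto simp: S_def)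
    then have fin: "finite ((\<lambda>a. {b. assocR RR a b}) ` {d. MCD RR S d})"
      using H by (simp add: MCD_finite_def finite_up_to_assoc_def)
    define d where "d k = enc (Poly_Mapping.single (0, 1, of_nat k) (1::bit))" for k :: nat
    have dR: "d k \<in> carrier RR" for k
      unfolding d_def using Rset_single[of "(0, 1, of_nat k)"] by (auto simp: Good_def)
    have MCDk: "MCD RR S (d k)" for k
    proof -
      define c1 where "c1 = enc (Poly_Mapping.single (1, 0, - of_nat k) (1::bit))"
      define c2 where "c2 = enc (Poly_Mapping.single (0, 1, - of_nat k) (1::bit))"
      have c1R: "c1 \<in> carrier RR" unfolding c1_def
        using Rset_single[of "(1, 0, - of_nat k)"] by (auto simp: Good_def)
      have c2R: "c2 \<in> carrier RR" unfolding c2_def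
        using Rset_single[of "(0, 1, - of_nat k)"] by (auto simp: Good_def)
      have e1: "s1 = d k \<otimes>\<^bsub>RR\<^esub> c1"
        by (simp add: s1_def d_def c1_def single_mult1)
      have e2: "s2 = d k \<otimes>\<^bsub>RR\<^esub> c2"
        by (simp add: s2_def d_def c2_def single_mult1)
      have part1: "\<forall>s\<in>S. dvdR RR (d k) s"
        using e1 e2 c1R c2R dR s1R s2R by (auto simp: S_def dvdR_def)
      have part2: "e \<in> Units RR"
        if eR: "e \<in> carrier RR"
          and hyp: "\<forall>s\<in>S. \<forall>c\<in>carrier RR. s = d k \<otimes>\<^bsub>RR\<^esub> c \<longrightarrow> dvdR RR e c" for e
      proof -
        have "dvdR RR e c1" using hyp e1 c1R by (auto simp: S_def)
        then obtain a b where ab: "e = enc (Poly_Mapping.single a 1)" "a \<in> Good" "b \<in> Good"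
            "a + b = (1, 0, - of_nat k)"
          using RR_dvd_single[OF eR] unfolding c1_def by blast
        have "dvdR RR e c2" using hyp e2 c2R by (auto simp: S_def)
        then obtain a' b' where ab': "e = enc (Poly_Mapping.single a' 1)" "a' \<in> Good" "b' \<in> Good"
            "a' + b' = (0, 1, - of_nat k)"
          using RR_dvd_single[OF eR] unfolding c2_def by blast
        have "a' = a" using ab(1) ab'(1) single_inj1 by simp
        then have "a = 0" using Good_key[OF ab(2) ab(3) ab'(3) ab(4)] ab'(4) by simp
        then show ?thesis using ab(1) by (simp add: RR_Units)
      qed
      show ?thesis unfolding MCD_def using part1 part2 by blast
    qed
    have MCD_carrier: "{d. MCD RR S d} \<subseteq> carrier RR"
      using SS by (auto simp: MCD_def dvdR_def)
    have "inj_on (\<lambda>a. {b. assocR RR a b}) {d. MCD RR S d}"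
      using MCD_carrier RR_assoc_class by (intro inj_onI) (metis singleton_inject subsetD)
    then have finM: "finite {d. MCD RR S d}" using fin finite_imageD by blast
    have "range d \<subseteq> {d. MCD RR S d}" using MCDk by auto
    then have "finite (range d)" using finM by (rule finite_subset)
    moreover have "inj d"
    proof (rule injI)
      fix k l assume "d k = d l"
      then have "Poly_Mapping.single ((0, 1, of_nat k)::E) (1::bit) = Poly_Mapping.single ((0, 1, of_nat l)::E) 1"
        by (simp add: d_def)
      then show "k = l" by (metis single_inj1 prod.inject of_nat_eq_iff)
    qed
    ultimately show False using finite_imageD by fastforce
  qed
qed

end
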